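(* Let $R$ be a ring with identity and involution $*$, and let $a,b\in R$ be core invertible with core inverses $a^{\oplus}$ and $b^{\oplus}$. If $ab=0$ and $a^*b=0$, then $a+b$ is core invertible and $$(a+b)^{\oplus} = b^{\pi}a^{\oplus} + b^{\oplus},$$ where $b^{\pi}=1-b^{\oplus}b$.
   Context: An involution on $R$ satisfies $(a^* )^*=a$, $(ab)^*=b^*a^*$, $(a+b)^*=a^*+b^*$. An element $x\in R$ is a core inverse of $a$ if $axa=a$, $xR=aR$ and $Rx=Ra^*$; it is unique when it exists and is denoted $a^{\oplus}$. *)

theory Defs
  imports Main
begin

definition is_involution :: "('a::ring_1 \<Rightarrow> 'a) \<Rightarrow> bool" where
  "is_involution s \<longleftrightarrow>
     (\<forall>a. s (s a) = a) \<and> (\<forall>a b. s (a * b) = s b * s a) \<and> (\<forall>a b. s (a + b) = s a + s b)"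

definition right_ideal :: "'a::ring_1 \<Rightarrow> 'a set" where
  "right_ideal a = {a * r | r. True}"

definition left_ideal :: "'a::ring_1 \<Rightarrow> 'a set" where
  "left_ideal a = {r * a | r. True}"

definition is_core_inverse :: "('a::ring_1 \<Rightarrow> 'a) \<Rightarrow> 'a \<Rightarrow> 'a \<Rightarrow> bool" where
  "is_core_inverse s a x \<longleftrightarrow>
     a * x * a = a \<and> right_ideal x = right_ideal a \<and> left_ideal x = left_ideal (s a)"

definition core_invertible :: "('a::ring_1 \<Rightarrow> 'a) \<Rightarrow> 'a \<Rightarrow> bool" where
  "core_invertible s a \<longleftrightarrow> (\<exists>x. is_core_inverse s a x)"

end

theory Submission
  imports Defs
begin

lemma inv_zero: "is_involution s \<Longrightarrow> s 0 = (0::'a::ring_1)"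
proof -
  assume h: "is_involution s"
  have "s (0 + 0) = s 0 + s 0" using h unfolding is_involution_def by blast
  thus ?thesis by simp
qed

lemma core_facts:
  fixes s :: "'a::ring_1 \<Rightarrow> 'a"
  assumes inv: "is_involution s" and c: "is_core_inverse s a x"
  shows "a*x*a = a" "x*a*x = x" "s (a*x) = a*x" "x*a*a = a" "a*x*x = x"
    "\<exists>r. x = a*r" "\<exists>r. x = r * s a"
proof -
  have ss: "\<And>u. s (s u) = u" and sm: "\<And>u v. s (u*v) = s v * s u"
    using inv unfolding is_involution_def by auto
  have axa: "a*x*a = a" using c unfolding is_core_inverse_def by blast
  have "x \<in> right_ideal x" unfolding right_ideal_def by (auto intro: exI[of _ 1])
  hence "x \<in> right_ideal a" using c unfolding is_core_inverse_def by simp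
  then obtain r1 where r1: "x = a*r1" unfolding right_ideal_def by auto
  have "a \<in> right_ideal a" unfolding right_ideal_def by (auto intro: exI[of _ 1])
  hence "a \<in> right_ideal x" using c unfolding is_core_inverse_def by simp
  then obtain r2 where r2: "a = x*r2" unfolding right_ideal_def by auto
  have "x \<in> left_ideal x" unfolding left_ideal_def by (auto intro: exI[of _ 1])
  hence "x \<in> left_ideal (s a)" using c unfolding is_core_inverse_def by simp
  then obtain r3 where r3: "x = r3 * s a" unfolding left_ideal_def by auto
  have axx: "a*x*x = x"
  proof -
    have "a*x*x = (a*x*a)*r1" using r1 by (simp add: mult.assoc)
    thus ?thesis using axa r1 by simp
  qed
  have sa: "s a = s a * s x * s a" using axa sm by (metis mult.assoc)
  have x1: "x = x * s (a*x)"
  proof -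
    have "x = r3 * (s a * s x * s a)" using r3 sa by simp
    also have "\<dots> = x * (s x * s a)" using r3 by (simp add: mult.assoc)
    finally show ?thesis using sm by simp
  qed
  have ax: "a*x = a*x * s(a*x)" using x1 by (metis mult.assoc)
  have sax: "s (a*x) = a*x"
  proof -
    have "s (a*x) = s (s (a*x)) * s (a*x)" using ax sm by metis
    thus ?thesis using ax ss by simp
  qed
  have xax: "x*a*x = x" using x1 sax by (simp add: mult.assoc)
  have xaa: "x*a*a = a"
  proof -
    have "x*a*(x*r2) = x*r2" using xax by (metis mult.assoc)
    thus ?thesis using r2 by (simp add: mult.assoc)
  qed
  show "a*x*a = a" "x*a*x = x" "s (a*x) = a*x" "x*a*a = a" "a*x*x = x"
    using axa xax sax xaa axx by auto
  show "\<exists>r. x = a*r" using r1 by blast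
  show "\<exists>r. x = r * s a" using r3 by blast
qed

lemma core_intro:
  fixes s :: "'a::ring_1 \<Rightarrow> 'a"
  assumes inv: "is_involution s"
    and h1: "a*x*a = a" and h3: "s (a*x) = a*x" and h4: "x*a*a = a" and h5: "a*x*x = x"
  shows "is_core_inverse s a x"
proof -
  have ss: "\<And>u. s (s u) = u" and sm: "\<And>u v. s (u*v) = s v * s u"
    using inv unfolding is_involution_def by auto
  have xax: "x*a*x = x"
  proof -
    have "x*a*x = x*a*(a*x*x)" using h5 by simp
    also have "\<dots> = (x*a*a)*x*x" by (simp add: mult.assoc)
    finally show ?thesis using h4 h5 by simp
  qed
  have e1: "x = a*(x*x)" using h5 by (simp add: mult.assoc)
  have e2: "a = x*(a*a)" using h4 by (simp add: mult.assoc)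
  have e3: "x = (x * s x) * s a"
  proof -
    have "x = x * (a*x)" using xax by (simp add: mult.assoc)
    also have "\<dots> = x * s (a*x)" using h3 by simp
    finally show ?thesis using sm by (simp add: mult.assoc)
  qed
  have e4: "s a = (s a * a) * x"
  proof -
    have "s a = s (a*x*a)" using h1 by simp
    also have "\<dots> = s a * s (a*x)" using sm by (simp add: mult.assoc)
    finally show ?thesis using h3 by (simp add: mult.assoc)
  qed
  have R: "right_ideal x = right_ideal a"
  proof
    show "right_ideal x \<subseteq> right_ideal a" unfolding right_ideal_def
      by (auto, metis e1 mult.assoc)
    show "right_ideal a \<subseteq> right_ideal x" unfolding right_ideal_def
      by (auto, metis e2 mult.assoc)
  qed
  have L: "left_ideal x = left_ideal (s a)"
  proof
    show "left_ideal x \<subseteq> left_ideal (s a)" unfolding left_ideal_def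
      by (auto, metis e3 mult.assoc)
    show "left_ideal (s a) \<subseteq> left_ideal x" unfolding left_ideal_def
      by (auto, metis e4 mult.assoc)
  qed
  show ?thesis unfolding is_core_inverse_def using h1 R L by blast
qed

theorem theorem4p3:
  fixes s :: "'a::ring_1 \<Rightarrow> 'a" and a b ac bc :: 'a
  assumes "is_involution s"
    and "is_core_inverse s a ac"
    and "is_core_inverse s b bc"
    and "a * b = 0"
    and "s a * b = 0"
  shows "core_invertible s (a + b)
         \<and> is_core_inverse s (a + b) ((1 - bc * b) * ac + bc)"
proof -
  note inv = assms(1)
  have ss: "\<And>u. s (s u) = u" and sm: "\<And>u v. s (u*v) = s v * s u"
    and sp: "\<And>u v. s (u+v) = s u + s v"
    using inv unfolding is_involution_def by auto
  have s0: "s 0 = 0" using inv_zero[OF inv] .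
  note A = core_facts[OF inv assms(2)]
  note B = core_facts[OF inv assms(3)]
  obtain r1 where r1: "ac = a*r1" using A(6) by blast
  obtain r3 where r3: "ac = r3 * s a" using A(7) by blast
  obtain t1 where t1: "bc = b*t1" using B(6) by blast
  obtain t3 where t3: "bc = t3 * s b" using B(7) by blast
  have ab: "a*b = 0" and sab: "s a * b = 0" using assms(4,5) .
  have sba: "s b * a = 0" using sab sm ss s0 by metis
  have acb: "ac * b = 0" using r3 sab by (simp add: mult.assoc)
  have bca: "bc * a = 0" using t3 sba by (simp add: mult.assoc)
  have abc: "a * bc = 0" using t1 ab by (metis mult.assoc mult_zero_left)
  have bcac: "bc * ac = 0" using t3 r1 sba by (metis mult.assoc mult_zero_left mult_zero_right)
  have pbc: "a*ac*bc = 0" using t1 acb by (metis mult.assoc mult_zero_left mult_zero_right)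
  define y where "y = (1 - bc * b) * ac + bc"
  have cy: "(a+b)*y = a*ac + b*bc"
  proof -
    have "(a+b)*y = a*ac - a*bc*b*ac + a*bc + b*ac - b*bc*b*ac + b*bc"
      unfolding y_def by (simp add: algebra_simps)
    also have "\<dots> = a*ac + b*bc" using abc B(1) by simp
    finally show ?thesis .
  qed
  have h1: "(a+b)*y*(a+b) = a+b"
  proof -
    have "(a+b)*y*(a+b) = a*ac*a + a*ac*b + b*bc*a + b*bc*b" using cy by (simp add: algebra_simps)
    also have "\<dots> = a + b" using A(1) B(1) acb bca by (simp add: mult.assoc)
    finally show ?thesis .
  qed
  have h3: "s ((a+b)*y) = (a+b)*y" using cy sp A(3) B(3) by simp
  have yc: "y*(a+b) = (1 - bc*b)*ac*a + bc*b"
  proof -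
    have "y*(a+b) = (1 - bc*b)*(ac*a) + (1 - bc*b)*(ac*b) + bc*a + bc*b"
      unfolding y_def by (simp add: algebra_simps)
    thus ?thesis using acb bca by (simp add: mult.assoc)
  qed
  have h4: "y*(a+b)*(a+b) = a+b"
  proof -
    have "y*(a+b)*(a+b) = (1 - bc*b)*(ac*a*a) + (1 - bc*b)*ac*(a*b) + bc*(b*a) + bc*b*b"
      unfolding yc by (simp add: algebra_simps)
    also have "\<dots> = (1 - bc*b)*a + bc*b*a + b" using A(4) B(4) ab by (simp add: mult.assoc)
    also have "\<dots> = a + b" by (simp add: algebra_simps)
    finally show ?thesis .
  qed
  have h5: "(a+b)*y*y = y"
  proof -
    have "(a+b)*y*y = (a*ac + b*bc)*y" using cy by simp
    also have "\<dots> = a*ac*ac - a*ac*bc*b*ac + a*ac*bc + b*bc*ac - b*bc*bc*b*ac + b*bc*bc"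
      unfolding y_def by (simp add: algebra_simps)
    also have "\<dots> = ac - bc*b*ac + bc" using A(5) B(5) pbc bcac by (simp add: mult.assoc)
    also have "\<dots> = y" unfolding y_def by (simp add: algebra_simps)
    finally show ?thesis .
  qed
  have "is_core_inverse s (a+b) y" using core_intro[OF inv h1 h3 h4 h5] .
  thus ?thesis unfolding core_invertible_def y_def by blast
qed

end
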